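(* Let $p\in[0,1)$, $\alpha\in[0,1]$, $0\le h_1<\dots<h_N\le1$, and nonnegative weights $f_0^S(h_j),f_0^{NS}(h_j)$, $j=1,\dots,N$, with $\sum_jf_0^S(h_j)=\sum_jf_0^{NS}(h_j)=1$; set $f_0(h_j)=\alpha f_0^S(h_j)+(1-\alpha)f_0^{NS}(h_j)$, assume $f_0(h_N)>0$, and let $f_0([h_i,1])=\sum_{j\ge i}f_0(h_j)$. Let $m_0^{S,j}\in[-1,1]$ be given numbers (mean opinions of stubborn individuals at level $h_j$). Let $f^{NS,1},\dots,f^{NS,N}\in C([0,+\infty),P([-1,1]))$ (weak topology) with initial data $f_0^{NS,i}$, write $m^{NS,j}(t)=\int_{-1}^1w\,f^{NS,j}(t,dw)$, $$m(t)=\alpha\sum_{j}f_0^S(h_j)m_0^{S,j}+(1-\alpha)\sum_jf_0^{NS}(h_j)m^{NS,j}(t),\quad \beta_i(t)=\alpha\sum_{j\ge i}f_0^S(h_j)m_0^{S,j}+(1-\alpha)\sum_{j\ge i}f_0^{NS}(h_j)m^{NS,j}(t),$$ and assume that for all $i$, $t\ge0$ and $\phi\in C^1([-1,1])$, $$\int\phi\,df^{NS,i}(t)=\int\phi\,df_0^{NS,i}+\int_0^t\!\!\int_{-1}^1\phi'(w)\Big[p\big(m(s)-w\big)+(1-p)\big(\beta_i(s)-f_0([h_i,1])w\big)\Big]f^{NS,i}(s,dw)\,ds.$$ Then for every $i=1,\dots,N$ and $t\ge0$, $$|\mathrm{conv}(\mathrm{supp}\,f^{NS,i}(t))|\le|\mathrm{conv}(\mathrm{supp}\,f_0^{NS,i})|\,e^{-(p+(1-p)f_0([h_i,1]))t},$$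 where $|\mathrm{conv}(\mathrm{supp}\,\mu)|$ is the length of the convex hull of the support of $\mu$.
   Context: $P([-1,1])$ is the set of Borel probability measures on $[-1,1]$. The model: $w$ is an opinion, $h_i$ the hierarchy levels, $\alpha$ the fraction of stubborn individuals, $f^{NS,i}(t)$ the opinion distribution of non-stubborn individuals at level $h_i$; $\beta_i(t)$ equals $f_0([h_i,1])$ times the mean opinion of all individuals of hierarchy at least $h_i$. *)

theory Defs
  imports "HOL-Probability.Probability"
begin

definition prob_m11 :: "real measure \<Rightarrow> bool" where
  "prob_m11 M \<longleftrightarrow> sets M = sets (restrict_space borel {-1..1::real}) \<and> prob_space M"

definition weakly_cont_m11 :: "(real \<Rightarrow> real measure) \<Rightarrow> bool" where
  "weakly_cont_m11 f \<longleftrightarrow>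
     (\<forall>g::real \<Rightarrow> real. continuous_on {-1..1} g \<longrightarrow> continuous_on {0..} (\<lambda>t. \<integral>w. g w \<partial>(f t)))"

definition supp_m :: "real measure \<Rightarrow> real set" where
  "supp_m M = {x \<in> {-1..1}. \<forall>e>0. emeasure M (ball x e \<inter> {-1..1}) > 0}"

definition conv_supp_len :: "real measure \<Rightarrow> real" where
  "conv_supp_len M = measure lborel (convex hull (supp_m M))"

definition C1_m11 :: "(real \<Rightarrow> real) \<Rightarrow> (real \<Rightarrow> real) \<Rightarrow> bool" where
  "C1_m11 \<phi> \<phi>' \<longleftrightarrow> continuous_on {-1..1} \<phi>' \<and>
     (\<forall>w\<in>{-1..1}. (\<phi> has_real_derivative \<phi>' w) (at w within {-1..1}))"

end

theory Submission
  imports Defs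
begin


lemma pm_space: "prob_m11 M \<Longrightarrow> space M = {-1..1}"
  unfolding prob_m11_def by (metis sets_eq_imp_space_eq space_borel space_restrict_space Int_UNIV_right)

lemma pm_prob: "prob_m11 M \<Longrightarrow> prob_space M"
  unfolding prob_m11_def by simp

lemma pm_meas: assumes "prob_m11 M" "continuous_on {-1..1} g"
  shows "g \<in> borel_measurable M"
proof -
  have "g \<in> borel_measurable (restrict_space borel {-1..1::real})"
    by (rule borel_measurable_continuous_on_restrict[OF assms(2)])
  then show ?thesis using assms(1) unfolding prob_m11_def
    by (metis measurable_cong_sets)
qed

lemma pm_int: assumes "prob_m11 M" "continuous_on {-1..1} (g::real\<Rightarrow>real)"
  shows "integrable M g"
proof -
  interpret prob_space M using pm_prob[OF assms(1)] .
  obtain B where B: "\<forall>x\<in>{-1..1}. norm (g x) \<le> B"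
    using compact_imp_bounded[OF compact_continuous_image[OF assms(2) compact_Icc]]
    unfolding bounded_iff by auto
  show ?thesis
    apply (rule integrable_const_bound[where B=B])
    using B pm_space[OF assms(1)] apply (auto intro!: AE_I2)[1]
    by (rule pm_meas[OF assms])
qed

lemma pm_sets: "prob_m11 M \<Longrightarrow> ball x e \<inter> {-1..1} \<in> sets M"
  unfolding prob_m11_def by (auto simp: sets_restrict_space)



lemma supp_closed: assumes "prob_m11 M" shows "closed (supp_m M)"
  unfolding closed_limpt
proof (intro allI impI)
  fix x assume lp: "x islimpt supp_m M"
  have "x \<in> {-1..1}"
  proof -
    have "supp_m M \<subseteq> {-1..1}" unfolding supp_m_def by auto
    then have "x islimpt {-1..1::real}" using lp islimpt_subset by blast
    then show ?thesis using closed_limpt[of "{-1..1::real}"] by auto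
  qed
  moreover have "emeasure M (ball x e \<inter> {-1..1}) > 0" if e: "e > 0" for e
  proof -
    obtain y where y: "y \<in> supp_m M" "dist y x < e/2"
      using lp e unfolding islimpt_approachable by (meson half_gt_zero)
    have pos: "emeasure M (ball y (e/2) \<inter> {-1..1}) > 0" using y(1) e unfolding supp_m_def by auto
    have sub: "ball y (e/2) \<subseteq> ball x e"
    proof
      fix z assume "z \<in> ball y (e/2)"
      then have "dist y z < e/2" by simp
      then have "dist x z < e" using y(2) dist_triangle[of x z y] by (simp add: dist_commute)
      then show "z \<in> ball x e" by simp
    qed
    have "emeasure M (ball y (e/2) \<inter> {-1..1}) \<le> emeasure M (ball x e \<inter> {-1..1})"
      by (rule emeasure_mono) (use sub pm_sets[OF assms] in blast)+
    with pos show ?thesis by order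
  qed
  ultimately show "x \<in> supp_m M" unfolding supp_m_def by auto
qed

lemma supp_AE: assumes "prob_m11 M" shows "AE x in M. x \<in> supp_m M"
proof -
  define F where "F = {ball x e | x e. e > 0 \<and> emeasure M (ball x e \<inter> {-1..1}) = 0}"
  obtain F' where F': "F' \<subseteq> F" "countable F'" "\<Union>F' = \<Union>F"
    using Lindelof[of F] unfolding F_def by auto
  have null: "(\<Union>B\<in>F'. B \<inter> {-1..1}) \<in> null_sets M"
  proof (rule null_sets_UN')
    show "countable F'" by fact
    fix B assume "B \<in> F'"
    then obtain x e where "B = ball x e" "emeasure M (ball x e \<inter> {-1..1}) = 0"
      using F'(1) unfolding F_def by auto
    then show "B \<inter> {-1..1} \<in> null_sets M" using pm_sets[OF assms] by auto
  qed
  show ?thesis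
  proof (rule AE_I'[OF null])
    show "{x \<in> space M. x \<notin> supp_m M} \<subseteq> (\<Union>B\<in>F'. B \<inter> {-1..1})"
    proof
      fix x assume x: "x \<in> {x \<in> space M. x \<notin> supp_m M}"
      then have x1: "x \<in> {-1..1}" using pm_space[OF assms] by auto
      then obtain e where "e > 0" "\<not> emeasure M (ball x e \<inter> {-1..1}) > 0"
        using x unfolding supp_m_def by auto
      then have "ball x e \<in> F" unfolding F_def by (auto simp: zero_less_iff_neq_zero)
      then have "x \<in> \<Union>F" using \<open>e > 0\<close> by (meson UnionI centre_in_ball)
      then have "x \<in> \<Union>F'" using F'(3) by simp
      then show "x \<in> (\<Union>B\<in>F'. B \<inter> {-1..1})" using x1 by auto
    qed
  qed
qed

lemma supp_ne: assumes "prob_m11 M" shows "supp_m M \<noteq> {}"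
proof
  assume "supp_m M = {}"
  then have "AE x in M. False" using supp_AE[OF assms] by simp
  then show False using prob_space.AE_False[OF pm_prob[OF assms]] by simp
qed

lemma supp_hull: assumes "prob_m11 M"
  obtains a b where "a \<le> b" "convex hull (supp_m M) = {a..b}"
proof -
  have c: "compact (supp_m M)"
  proof -
    have "supp_m M \<subseteq> {-1..1}" unfolding supp_m_def by blast
    then have "bounded (supp_m M)" by (rule bounded_subset[rotated]) simp
    then show ?thesis using supp_closed[OF assms] unfolding compact_eq_bounded_closed by simp
  qed
  then have "compact (convex hull (supp_m M))" by (rule compact_convex_hull)
  moreover have "connected (convex hull (supp_m M))" by (simp add: convex_connected)
  ultimately obtain a b where ab: "convex hull (supp_m M) = {a..b}"
    using connected_compact_interval_1 by blast
  moreover have "a \<le> b"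
  proof -
    obtain z where "z \<in> supp_m M" using supp_ne[OF assms] by blast
    then have "z \<in> {a..b}" using ab hull_subset[of "supp_m M" convex] by blast
    then show ?thesis by simp
  qed
  ultimately show ?thesis using that by blast
qed



lemma binexp: "((w::real) - y)^n = (\<Sum>j\<le>n. real (n choose j) * w^j * (-y)^(n-j))"
  using binomial_ring[of w "-y" n] by simp

lemma I1: "(\<Sum>j\<le>n. real (n choose j) * w^j * (real (n-j) * (-1 * (-y)^(n-j - Suc 0))))
   = - (real n * (w - (y::real))^(n - Suc 0))"
proof -
  have d1: "((\<lambda>y. (w - y)^n) has_real_derivative (real n * (-1 * (w-y)^(n - Suc 0)))) (at y)"
    by (auto intro!: derivative_eq_intros)
  have d2: "((\<lambda>y. (\<Sum>j\<le>n. real (n choose j) * w^j * (-y)^(n-j))) has_real_derivative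
     (\<Sum>j\<le>n. real (n choose j) * w^j * (real (n-j) * (-1 * (-y)^(n-j - Suc 0))))) (at y)"
    by (auto intro!: derivative_eq_intros sum.cong simp: algebra_simps)
  have e: "(\<lambda>y. (w - y)^n) = (\<lambda>y. (\<Sum>j\<le>n. real (n choose j) * w^j * (-y)^(n-j)))"
    using binexp by auto
  show ?thesis using DERIV_unique[OF d2 d1[unfolded e]] by simp
qed

lemma I2: "(\<Sum>j\<le>n. real (n choose j) * (real j * (1 * w^(j - Suc 0))) * (-y)^(n-j))
   = real n * (w - (y::real))^(n - Suc 0)"
proof -
  have d1: "((\<lambda>w. (w - y)^n) has_real_derivative (real n * (1 * (w-y)^(n - Suc 0)))) (at w)"
    by (auto intro!: derivative_eq_intros)
  have d2: "((\<lambda>w. (\<Sum>j\<le>n. real (n choose j) * w^j * (-y)^(n-j))) has_real_derivative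
     (\<Sum>j\<le>n. real (n choose j) * (real j * (1 * w^(j - Suc 0))) * (-y)^(n-j))) (at w)"
    by (auto intro!: derivative_eq_intros sum.cong simp: algebra_simps)
  have e: "(\<lambda>w. (w - y)^n) = (\<lambda>w. (\<Sum>j\<le>n. real (n choose j) * w^j * (-y)^(n-j)))"
    using binexp by auto
  show ?thesis using DERIV_unique[OF d2 d1[unfolded e]] by simp
qed



lemma pm_int_pow: "prob_m11 M \<Longrightarrow> integrable M (\<lambda>w. a * (w::real)^n)"
  by (rule pm_int) (auto intro!: continuous_intros)

lemma int_sum_pow: assumes "prob_m11 M" "finite J"
  shows "(\<integral>w. (\<Sum>j\<in>J. a j * w^(e j)) \<partial>M) = (\<Sum>j\<in>J. a j * (\<integral>w. (w::real)^(e j) \<partial>M))"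
proof -
  have "(\<integral>w. (\<Sum>j\<in>J. a j * w^(e j)) \<partial>M) = (\<Sum>j\<in>J. (\<integral>w. a j * (w::real)^(e j) \<partial>M))"
    by (rule Bochner_Integration.integral_sum) (rule pm_int_pow[OF assms(1)])
  then show ?thesis by (simp add: integral_mult_right_zero)
qed

context
  fixes \<mu> :: "real \<Rightarrow> real measure" and c :: "real \<Rightarrow> real" and lam :: real
  assumes prob: "\<And>t. t \<ge> 0 \<Longrightarrow> prob_m11 (\<mu> t)"
    and wc: "weakly_cont_m11 \<mu>"
    and ccont: "continuous_on {0..} c"
    and eq: "\<And>n t. t \<ge> 0 \<Longrightarrow> (\<integral>w. w^n \<partial>\<mu> t) = (\<integral>w. w^n \<partial>\<mu> 0) +
        integral {0..t} (\<lambda>s. \<integral>w. real n * w^(n-1) * (c s - lam * w) \<partial>\<mu> s)"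
begin

definition "MM n s = (\<integral>w. w^n \<partial>\<mu> s)"
definition "GG n s = (\<integral>w. real n * w^(n-1) * (c s - lam * w) \<partial>\<mu> s)"

lemma MM_cont: "continuous_on {0..} (MM n)"
proof -
  have "continuous_on {-1..1} (\<lambda>w::real. w^n)" by (intro continuous_intros)
  then show ?thesis using wc unfolding weakly_cont_m11_def MM_def by blast
qed

lemma GG_split: assumes "s \<ge> 0"
  shows "GG n s = real n * c s * MM (n-1) s - real n * lam * MM n s"
proof -
  have pw: "real n * w^(n-1) * (c s - lam * w) = real n * c s * w^(n-1) - real n * lam * w^n" for w :: real
  proof (cases n)
    case (Suc m) then show ?thesis by (simp add: algebra_simps)
  qed simp
  show ?thesis unfolding GG_def MM_def pw
    using pm_int_pow[OF prob[OF assms]]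
    by (simp add: integral_mult_right_zero)
qed

lemma GG_cont: "continuous_on {0..} (GG n)"
proof -
  have "continuous_on {0..} (\<lambda>s. real n * c s * MM (n-1) s - real n * lam * MM n s)"
    using MM_cont ccont by (auto intro!: continuous_intros)
  then show ?thesis by (rule continuous_on_cong[THEN iffD1, rotated 2]) (auto simp: GG_split)
qed

lemma MM_deriv: assumes "t \<in> {0..T}"
  shows "(MM n has_real_derivative GG n t) (at t within {0..T})"
proof -
  have "((\<lambda>u. integral {0..u} (GG n)) has_vector_derivative GG n t) (at t within {0..T})"
    by (rule integral_has_vector_derivative[OF continuous_on_subset[OF GG_cont] assms]) auto
  then have "((\<lambda>u. MM n 0 + integral {0..u} (GG n)) has_real_derivative GG n t) (at t within {0..T})"
    unfolding has_real_derivative_iff_has_vector_derivative[symmetric]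
    by (auto intro!: derivative_eq_intros)
  then show ?thesis
    apply (rule has_field_derivative_transform_within[OF _ zero_less_one assms])
  proof -
    fix x assume "x \<in> {0..T}"
    then show "MM n 0 + integral {0..x} (GG n) = MM n x"
      unfolding MM_def GG_def[abs_def] using eq[of x n] by simp
  qed
qed

definition "yy y0 t = exp(-lam*t) * (y0 + integral {0..t} (\<lambda>s. exp(lam * s) * c s))"

lemma yy0: "yy y0 0 = y0" unfolding yy_def by simp

lemma yy_deriv: assumes "t \<in> {0..T}"
  shows "(yy y0 has_real_derivative (c t - lam * yy y0 t)) (at t within {0..T})"
proof -
  have cc: "continuous_on {0..T} (\<lambda>s. exp(lam * s) * c s)"
    using continuous_on_subset[OF ccont, of "{0..T}"] by (auto intro!: continuous_intros)
  have d: "((\<lambda>u. integral {0..u} (\<lambda>s. exp(lam * s) * c s)) has_real_derivative exp(lam*t) * c t) (at t within {0..T})"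
    unfolding has_real_derivative_iff_has_vector_derivative
    by (rule integral_has_vector_derivative[OF cc assms])
  have e: "((\<lambda>t. exp(-lam*t)) has_real_derivative exp(-lam*t) * (-lam)) (at t within {0..T})"
    by (auto intro!: derivative_eq_intros)
  have d': "((\<lambda>u. y0 + integral {0..u} (\<lambda>s. exp(lam * s) * c s)) has_real_derivative exp(lam*t) * c t) (at t within {0..T})"
    using DERIV_add[OF DERIV_const d] by simp
  have D: "((\<lambda>t. exp(-lam*t) * (y0 + integral {0..t} (\<lambda>s. exp(lam * s) * c s))) has_real_derivative
     (exp(-lam*t) * (-lam) * (y0 + integral {0..t} (\<lambda>s. exp(lam * s) * c s)) + exp(lam*t) * c t * exp(-lam*t))) (at t within {0..T})"
    by (rule DERIV_mult[OF e d'])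
  moreover have E: "exp(-lam*t) * (-lam) * (y0 + integral {0..t} (\<lambda>s. exp(lam * s) * c s)) + exp(lam*t) * c t * exp(-lam*t)
     = c t - lam * yy y0 t"
  proof -
    have "exp(lam*t) * exp(-lam*t) = 1" by (simp add: exp_add[symmetric])
    then show ?thesis unfolding yy_def by (simp add: algebra_simps)
  qed
  have F: "yy y0 = (\<lambda>t. exp(-lam*t) * (y0 + integral {0..t} (\<lambda>s. exp(lam * s) * c s)))"
    by (simp add: yy_def fun_eq_iff)
  show ?thesis using D[unfolded E, folded F] .
qed

definition "PHI n y0 t = (\<integral>w. (w - yy y0 t)^n \<partial>\<mu> t)"

lemma PHI_sum: assumes "t \<ge> 0"
  shows "PHI n y0 t = (\<Sum>j\<le>n. (real (n choose j) * (-yy y0 t)^(n-j)) * MM j t)"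
proof -
  have "\<And>w. (w - yy y0 t)^n = (\<Sum>j\<le>n. (real (n choose j) * (-yy y0 t)^(n-j)) * w^j)"
    unfolding binexp by (rule sum.cong) (simp_all add: algebra_simps)
  then show ?thesis unfolding PHI_def MM_def
    using int_sum_pow[OF prob[OF assms], of "{..n}"] by simp
qed

definition "DD n y0 t = (\<Sum>j\<le>n. (real (n choose j) * (real (n-j) * (-1 * (-yy y0 t)^(n-j - Suc 0))) * (c t - lam * yy y0 t)) * MM j t
    + (real (n choose j) * (-yy y0 t)^(n-j)) * GG j t)"

lemma PHI_deriv: assumes "t \<in> {0..T}"
  shows "(PHI n y0 has_real_derivative DD n y0 t) (at t within {0..T})"
proof -
  have "((\<lambda>t. (\<Sum>j\<le>n. (real (n choose j) * (-yy y0 t)^(n-j)) * MM j t)) has_real_derivative DD n y0 t) (at t within {0..T})"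
    unfolding DD_def
    by (auto intro!: derivative_eq_intros yy_deriv[OF assms] MM_deriv[OF assms] sum.cong simp: algebra_simps)
  then show ?thesis
    by (rule has_field_derivative_transform_within[OF _ zero_less_one assms]) (auto simp: PHI_sum)
qed

lemma pointwise: "(\<Sum>j\<le>n. (real (n choose j) * (real (n-j) * (-1 * (-y)^(n-j - Suc 0))) * (c t - lam * y)) * w^j
    + (real (n choose j) * (-y)^(n-j)) * (real j * w^(j-1) * (c t - lam * w)))
   = - (real n * lam) * (w - (y::real))^n"
proof -
  have "(\<Sum>j\<le>n. (real (n choose j) * (real (n-j) * (-1 * (-y)^(n-j - Suc 0))) * (c t - lam * y)) * w^j
    + (real (n choose j) * (-y)^(n-j)) * (real j * w^(j-1) * (c t - lam * w)))
    = (c t - lam * y) * (\<Sum>j\<le>n. real (n choose j) * w^j * (real (n-j) * (-1 * (-y)^(n-j - Suc 0))))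
      + (c t - lam * w) * (\<Sum>j\<le>n. real (n choose j) * (real j * (1 * w^(j - Suc 0))) * (-y)^(n-j))"
    unfolding sum_distrib_left sum.distrib[symmetric] by (rule sum.cong) (simp_all add: algebra_simps)
  also have "\<dots> = (c t - lam * y) * (- (real n * (w - y)^(n - Suc 0))) + (c t - lam * w) * (real n * (w - y)^(n - Suc 0))"
    unfolding I1 I2 ..
  also have "\<dots> = - (real n * lam) * (w - y)^n"
  proof (cases n)
    case (Suc m) then show ?thesis by (simp add: algebra_simps)
  qed simp
  finally show ?thesis .
qed

lemma DD_eq: assumes "t \<ge> 0" shows "DD n y0 t = - (real n * lam) * PHI n y0 t"
proof -
  let ?y = "yy y0 t"
  define A where "A j = real (n choose j) * (real (n-j) * (-1 * (-?y)^(n-j - Suc 0))) * (c t - lam * ?y)" for j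
  define B where "B j = real (n choose j) * (-?y)^(n-j)" for j
  have P: "prob_m11 (\<mu> t)" by (rule prob[OF assms])
  have int2: "integrable (\<mu> t) (\<lambda>w. B j * (real j * w^(j-1) * (c t - lam * w)))" for j
    by (rule pm_int[OF P]) (auto intro!: continuous_intros)
  have "(\<integral>w. (\<Sum>j\<le>n. A j * w^j + B j * (real j * w^(j-1) * (c t - lam * w))) \<partial>\<mu> t)
     = (\<Sum>j\<le>n. (\<integral>w. A j * w^j + B j * (real j * w^(j-1) * (c t - lam * w)) \<partial>\<mu> t))"
    by (rule Bochner_Integration.integral_sum) (intro Bochner_Integration.integrable_add pm_int_pow[OF P] int2)
  also have "\<dots> = (\<Sum>j\<le>n. A j * MM j t + B j * GG j t)"
  proof (rule sum.cong)
    fix j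
    have "(\<integral>w. A j * w^j + B j * (real j * w^(j-1) * (c t - lam * w)) \<partial>\<mu> t)
       = (\<integral>w. A j * w^j \<partial>\<mu> t) + (\<integral>w. B j * (real j * w^(j-1) * (c t - lam * w)) \<partial>\<mu> t)"
      by (rule Bochner_Integration.integral_add[OF pm_int_pow[OF P] int2])
    then show "(\<integral>w. A j * w^j + B j * (real j * w^(j-1) * (c t - lam * w)) \<partial>\<mu> t) = A j * MM j t + B j * GG j t"
      unfolding MM_def GG_def by (simp add: integral_mult_right_zero)
  qed simp
  finally have 1: "DD n y0 t = (\<integral>w. (\<Sum>j\<le>n. A j * w^j + B j * (real j * w^(j-1) * (c t - lam * w))) \<partial>\<mu> t)"
    unfolding DD_def A_def B_def by simp
  show ?thesis unfolding 1 unfolding A_def B_def pointwise PHI_def by simp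
qed

lemma PHI_const: assumes "t \<in> {0..T}"
  shows "PHI n y0 t = PHI n y0 0 * exp (- (real n * lam) * t)"
proof -
  have "\<exists>k. \<forall>x\<in>{0..T}. PHI n y0 x * exp (real n * lam * x) = k"
  proof (rule has_field_derivative_zero_constant)
    fix x assume x: "x \<in> {0..T}"
    have "((\<lambda>x. PHI n y0 x * exp (real n * lam * x)) has_real_derivative
       DD n y0 x * exp (real n * lam * x) + PHI n y0 x * (exp (real n * lam * x) * (real n * lam))) (at x within {0..T})"
      by (auto intro!: derivative_eq_intros PHI_deriv[OF x])
    moreover have "DD n y0 x * exp (real n * lam * x) + PHI n y0 x * (exp (real n * lam * x) * (real n * lam)) = 0"
      using x by (simp add: DD_eq algebra_simps)
    ultimately show "((\<lambda>x. PHI n y0 x * exp (real n * lam * x)) has_real_derivative 0) (at x within {0..T})"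
      by simp
  qed (simp add: convex_real_interval)
  then obtain k where k: "\<forall>x\<in>{0..T}. PHI n y0 x * exp (real n * lam * x) = k" by blast
  have "0 \<in> {0..T}" using assms by auto
  then have "PHI n y0 t * exp (real n * lam * t) = PHI n y0 0" using k assms by force
  then show ?thesis by (simp add: exp_minus field_simps)
qed

lemma core: assumes t: "t \<ge> 0"
  shows "conv_supp_len (\<mu> t) \<le> conv_supp_len (\<mu> 0) * exp (- lam * t)"
proof -
  have P0: "prob_m11 (\<mu> 0)" by (rule prob) simp
  have Pt: "prob_m11 (\<mu> t)" by (rule prob[OF t])
  interpret p0: prob_space "\<mu> 0" by (rule pm_prob[OF P0])
  interpret pt: prob_space "\<mu> t" by (rule pm_prob[OF Pt])
  obtain a b where ab: "a \<le> b" "convex hull (supp_m (\<mu> 0)) = {a..b}" using supp_hull[OF P0] by blast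
  define y0 where "y0 = (a + b) / 2"
  define r where "r = (b - a) / 2"
  define R where "R = r * exp (- lam * t)"
  define y where "y = yy y0 t"
  have r0: "r \<ge> 0" using ab unfolding r_def by simp
  have R0: "R \<ge> 0" unfolding R_def using r0 by simp
  have len0: "conv_supp_len (\<mu> 0) = 2 * r" unfolding conv_supp_len_def ab(2) r_def using ab(1) by simp
  have bound: "PHI (2*k) y0 t \<le> (R^2)^k" for k
  proof -
    have "AE w in \<mu> 0. (w - y0)^(2*k) \<le> (r^2)^k"
      using supp_AE[OF P0]
    proof (rule AE_mp, intro AE_I2 impI)
      fix w assume "w \<in> supp_m (\<mu> 0)"
      then have "w \<in> {a..b}" using ab(2) hull_subset[of "supp_m (\<mu> 0)" convex] by blast
      then have "\<bar>w - y0\<bar> \<le> r" unfolding y0_def r_def abs_le_iff atLeastAtMost_iff add_divide_distrib diff_divide_distrib by linarith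
      then have "\<bar>w - y0\<bar>^(2*k) \<le> r^(2*k)" by (rule power_mono) simp
      then show "(w - y0)^(2*k) \<le> (r^2)^k" by (simp add: power_mult power_even_abs)
    qed
    then have "PHI (2*k) y0 0 \<le> (r^2)^k" unfolding PHI_def yy0
      by (intro p0.integral_le_const pm_int[OF P0]) (auto intro!: continuous_intros)
    moreover have "PHI (2*k) y0 t = PHI (2*k) y0 0 * exp (- (real (2*k) * lam) * t)"
      by (rule PHI_const[of t t]) (use t in auto)
    moreover have "exp (- (real (2*k) * lam) * t) = (exp (- lam * t)^2)^k"
      by (simp add: exp_of_nat_mult[symmetric] power_mult[symmetric] algebra_simps)
    ultimately have "PHI (2*k) y0 t \<le> (r^2)^k * (exp (- lam * t)^2)^k"
      by (simp add: mult_right_mono)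
    also have "\<dots> = (R^2)^k" unfolding R_def by (simp add: power_mult_distrib)
    finally show ?thesis .
  qed
  have supp_sub: "supp_m (\<mu> t) \<subseteq> {y - R..y + R}"
  proof
    fix x assume x: "x \<in> supp_m (\<mu> t)"
    show "x \<in> {y - R..y + R}"
    proof (rule ccontr)
      assume "x \<notin> {y - R..y + R}"
      then have d: "\<bar>x - y\<bar> > R" by auto
      define e where "e = (\<bar>x - y\<bar> - R) / 2"
      have e0: "e > 0" using d unfolding e_def by simp
      define B where "B = ball x e \<inter> {-1..1}"
      have Bs: "B \<in> sets (\<mu> t)" unfolding B_def by (rule pm_sets[OF Pt])
      have "emeasure (\<mu> t) B > 0" using x e0 unfolding supp_m_def B_def by auto
      then have del: "measure (\<mu> t) B > 0"
        by (simp add: pt.emeasure_eq_measure)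
      have del1: "measure (\<mu> t) B \<le> 1" by simp
      have key: "measure (\<mu> t) B * (((R + e)^2)^k) \<le> (R^2)^k" for k
      proof -
        have "measure (\<mu> t) B * (((R + e)^2)^k) = (\<integral>w. indicator B w * ((R + e)^2)^k \<partial>\<mu> t)"
          using Bs pm_space[OF Pt] unfolding B_def by (simp add: Int_absorb2)
        also have "\<dots> \<le> (\<integral>w. (w - y)^(2*k) \<partial>\<mu> t)"
        proof (rule integral_mono)
          show "integrable (\<mu> t) (\<lambda>w. indicator B w * ((R + e)^2)^k)"
            using Bs by (intro integrable_mult_left integrable_real_indicator) (auto simp: pt.emeasure_eq_measure)
          show "integrable (\<mu> t) (\<lambda>w. (w - y)^(2*k))"
            by (rule pm_int[OF Pt]) (auto intro!: continuous_intros)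
          fix w assume "w \<in> space (\<mu> t)"
          show "indicator B w * ((R + e)^2)^k \<le> (w - y)^(2*k)"
          proof (cases "w \<in> B")
            case True
            then have "dist x w < e" unfolding B_def by auto
            then have xw: "\<bar>x - w\<bar> < e" unfolding dist_real_def .
            have e2: "e * 2 = \<bar>x - y\<bar> - R" unfolding e_def by simp
            have tri: "\<bar>x - y\<bar> \<le> \<bar>x - w\<bar> + \<bar>w - y\<bar>" by arith
            have "\<bar>w - y\<bar> \<ge> R + e" using xw e2 tri by linarith
            then have "(R + e)^(2*k) \<le> \<bar>w - y\<bar>^(2*k)" by (rule power_mono) (use R0 e0 in simp)
            then show ?thesis using True by (simp add: power_mult[symmetric] power_even_abs)
          next
            case False
            then show ?thesis by (simp add: power_mult)
          qed
        qed
        also have "\<dots> = PHI (2*k) y0 t" unfolding PHI_def y_def ..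
        also have "\<dots> \<le> (R^2)^k" by (rule bound)
        finally show ?thesis .
      qed
      have Q: "(R + e)^2 > R^2" using R0 e0 by (intro power_strict_mono) auto
      show False
      proof (cases "R = 0")
        case True
        have "measure (\<mu> t) B * e^2 > 0" using del e0 by simp
        then show False using key[of 1] True by simp
      next
        case False
        then have R2: "R^2 > 0" using R0 by simp
        have q1: "(R + e)^2 / R^2 > 1" using Q R2 by simp
        obtain k where k: "1 / measure (\<mu> t) B < ((R + e)^2 / R^2)^k"
          using real_arch_pow[OF q1] by blast
        have "measure (\<mu> t) B * ((R + e)^2 / R^2)^k \<le> 1"
          using key[of k] R2 by (simp add: power_divide field_simps)
        then show False using k del by (simp add: field_simps)
      qed
    qed
  qed
  have hsub: "convex hull (supp_m (\<mu> t)) \<subseteq> {y - R..y + R}"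
    by (rule hull_minimal[OF supp_sub]) (simp add: convex_real_interval)
  have "conv_supp_len (\<mu> t) \<le> measure lborel {y - R..y + R}"
    unfolding conv_supp_len_def
  proof (cases "convex hull (supp_m (\<mu> t)) \<in> sets lborel")
    case True
    show "measure lborel (convex hull supp_m (\<mu> t)) \<le> measure lborel {y - R..y + R}"
      by (rule measure_mono_fmeasurable[OF hsub True]) (metis cbox_interval fmeasurable_cbox)
  next
    case False
    then show "measure lborel (convex hull supp_m (\<mu> t)) \<le> measure lborel {y - R..y + R}"
      by (simp add: measure_notin_sets)
  qed
  also have "\<dots> = 2 * R" using R0 by simp
  also have "\<dots> = conv_supp_len (\<mu> 0) * exp (- lam * t)" unfolding len0 R_def by simp
  finally show ?thesis .
qed

end

theorem proposition4p2:
  fixes p \<alpha> :: real and N :: nat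
    and h fS fNS mS :: "nat \<Rightarrow> real"
    and f :: "nat \<Rightarrow> real \<Rightarrow> real measure"
    and f0NS :: "nat \<Rightarrow> real measure"
  assumes p: "0 \<le> p" "p < 1"
    and alpha: "0 \<le> \<alpha>" "\<alpha> \<le> 1"
    and N: "N \<ge> 1"
    and h_mono: "\<And>i j. 1 \<le> i \<Longrightarrow> i < j \<Longrightarrow> j \<le> N \<Longrightarrow> h i < h j"
    and h_range: "0 \<le> h 1" "h N \<le> 1"
    and fS_nonneg: "\<And>j. 1 \<le> j \<Longrightarrow> j \<le> N \<Longrightarrow> fS j \<ge> 0"
    and fNS_nonneg: "\<And>j. 1 \<le> j \<Longrightarrow> j \<le> N \<Longrightarrow> fNS j \<ge> 0"
    and fS_sum: "(\<Sum>j=1..N. fS j) = 1"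
    and fNS_sum: "(\<Sum>j=1..N. fNS j) = 1"
    and f0_top: "\<alpha> * fS N + (1 - \<alpha>) * fNS N > 0"
    and mS: "\<And>j. 1 \<le> j \<Longrightarrow> j \<le> N \<Longrightarrow> mS j \<in> {-1..1}"
    and f_prob: "\<And>i t. 1 \<le> i \<Longrightarrow> i \<le> N \<Longrightarrow> t \<ge> 0 \<Longrightarrow> prob_m11 (f i t)"
    and f0_prob: "\<And>i. 1 \<le> i \<Longrightarrow> i \<le> N \<Longrightarrow> prob_m11 (f0NS i)"
    and f_cont: "\<And>i. 1 \<le> i \<Longrightarrow> i \<le> N \<Longrightarrow> weakly_cont_m11 (f i)"
    and f_init: "\<And>i. 1 \<le> i \<Longrightarrow> i \<le> N \<Longrightarrow> f i 0 = f0NS i"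
    and weak_sol: "\<And>i t \<phi> \<phi>'. 1 \<le> i \<Longrightarrow> i \<le> N \<Longrightarrow> t \<ge> 0 \<Longrightarrow> C1_m11 \<phi> \<phi>' \<Longrightarrow>
        (\<integral>w. \<phi> w \<partial>(f i t)) = (\<integral>w. \<phi> w \<partial>(f0NS i)) +
          integral {0..t} (\<lambda>s. \<integral>w. \<phi>' w *
            (p * ((\<alpha> * (\<Sum>j=1..N. fS j * mS j)
                   + (1 - \<alpha>) * (\<Sum>j=1..N. fNS j * (\<integral>v. v \<partial>(f j s)))) - w)
             + (1 - p) * ((\<alpha> * (\<Sum>j=i..N. fS j * mS j)
                   + (1 - \<alpha>) * (\<Sum>j=i..N. fNS j * (\<integral>v. v \<partial>(f j s))))
                 - (\<Sum>j=i..N. \<alpha> * fS j + (1 - \<alpha>) * fNS j) * w)) \<partial>(f i s))"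
  shows "\<And>i t. 1 \<le> i \<Longrightarrow> i \<le> N \<Longrightarrow> t \<ge> 0 \<Longrightarrow>
     conv_supp_len (f i t) \<le> conv_supp_len (f0NS i) *
       exp (- (p + (1 - p) * (\<Sum>j=i..N. \<alpha> * fS j + (1 - \<alpha>) * fNS j)) * t)"
proof -
  fix i :: nat and t :: real assume i: "1 \<le> i" "i \<le> N" and t: "t \<ge> 0"
  define F where "F = (\<Sum>j=i..N. \<alpha> * fS j + (1 - \<alpha>) * fNS j)"
  define lam where "lam = p + (1 - p) * F"
  define c where "c s = p * (\<alpha> * (\<Sum>j=1..N. fS j * mS j) + (1 - \<alpha>) * (\<Sum>j=1..N. fNS j * (\<integral>v. v \<partial>(f j s))))
     + (1 - p) * (\<alpha> * (\<Sum>j=i..N. fS j * mS j) + (1 - \<alpha>) * (\<Sum>j=i..N. fNS j * (\<integral>v. v \<partial>(f j s))))" for s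
  have prob: "\<And>t. t \<ge> 0 \<Longrightarrow> prob_m11 (f i t)" using f_prob i by blast
  have wc: "weakly_cont_m11 (f i)" using f_cont i by blast
  have hc: "continuous_on {0..} (\<lambda>s. \<integral>v. v \<partial>(f j s))" if "j \<in> {1..N}" for j
    using f_cont[of j] that continuous_on_id unfolding weakly_cont_m11_def by auto
  have hc2: "continuous_on {0..} (\<lambda>s. \<integral>v. v \<partial>(f j s))" if "j \<in> {i..N}" for j
    using hc[of j] that i by auto
  have ccont: "continuous_on {0..} c"
    unfolding c_def[abs_def] by (intro continuous_intros hc hc2)
  have eq: "(\<integral>w. w^n \<partial>f i s) = (\<integral>w. w^n \<partial>f i 0) +
        integral {0..s} (\<lambda>s. \<integral>w. real n * w^(n-1) * (c s - lam * w) \<partial>f i s)" if s: "s \<ge> 0" for n s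
  proof -
    have C1: "C1_m11 (\<lambda>w. w^n) (\<lambda>w. real n * w^(n-1))"
      unfolding C1_m11_def
      by (auto intro!: continuous_intros derivative_eq_intros)
    have pw: "real n * w^(n-1) *
            (p * ((\<alpha> * (\<Sum>j=1..N. fS j * mS j)
                   + (1 - \<alpha>) * (\<Sum>j=1..N. fNS j * (\<integral>v. v \<partial>(f j s)))) - w)
             + (1 - p) * ((\<alpha> * (\<Sum>j=i..N. fS j * mS j)
                   + (1 - \<alpha>) * (\<Sum>j=i..N. fNS j * (\<integral>v. v \<partial>(f j s))))
                 - (\<Sum>j=i..N. \<alpha> * fS j + (1 - \<alpha>) * fNS j) * w))
         = real n * w^(n-1) * (c s - lam * w)" for w s
      unfolding c_def lam_def F_def by (simp add: algebra_simps)
    show ?thesis using weak_sol[OF i s C1] f_init[OF i] unfolding pw by simp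
  qed
  have "conv_supp_len (f i t) \<le> conv_supp_len (f i 0) * exp (- lam * t)"
    by (rule core[OF prob wc ccont eq t]) auto
  then show "conv_supp_len (f i t) \<le> conv_supp_len (f0NS i) *
       exp (- (p + (1 - p) * (\<Sum>j=i..N. \<alpha> * fS j + (1 - \<alpha>) * fNS j)) * t)"
    using f_init[OF i] unfolding lam_def F_def by simp
qed

end
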